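(* Let $r>1$ and let $k,\ell,m$ be arbitrary positive integers. Let $n$ be the number of vertices of the $(k,\ell,m)$-megastar, choose $x_0$ uniformly at random from its vertex set, and run the Moran process with fitness $r$ on it with initial mutant $x_0$. Then the process fixates with probability at most $1-1/(52r^2\sqrt{n})$.
   Context: Moran process: given a directed graph $G$ and fitness $r$, one vertex $x_0$ is a mutant, the rest non-mutants. At each step a vertex $v$ is chosen with probability proportional to fitness (mutants $r$, non-mutants $1$), an out-neighbour $w$ of $v$ is chosen uniformly at random and the state of $v$ is copied to $w$. Fixation: eventually every vertex is a mutant. The $(k,\ell,m)$-megastar: disjoint union of reservoirs $R_1,\dots,R_\ell$ (size $m$), cliques $K_1,\dots,K_\ell$ (size $k$), feeders $a_1,\dots,a_\ell$, and centre $v^*$ (so $n=1+\ell(m+k+1)$); edges from $v^*$ to all reservoir vertices, from each vertex of $R_i$ to $a_i$, from $a_i$ to each vertex of $K_i$, both directions between distinct vertices of each $K_i$, and from every clique vertex to $v^*$. *)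

theory Defs
  imports Complex_Main
begin

text \<open>A directed graph is given by a finite vertex set V and an out-neighbour
  function out (out v is the set of out-neighbours of v).
  States of the Moran process are the sets of mutant vertices.\<close>

definition fitness :: "real \<Rightarrow> 'a set \<Rightarrow> 'a \<Rightarrow> real" where
  "fitness r S v = (if v \<in> S then r else 1)"

definition total_fitness :: "'a set \<Rightarrow> real \<Rightarrow> 'a set \<Rightarrow> real" where
  "total_fitness V r S = (\<Sum>v\<in>V. fitness r S v)"

definition moran_update :: "'a set \<Rightarrow> 'a \<Rightarrow> 'a \<Rightarrow> 'a set" where
  "moran_update S v w = (if v \<in> S then insert w S else S - {w})"

primrec fix_within :: "'a set \<Rightarrow> ('a \<Rightarrow> 'a set) \<Rightarrow> real \<Rightarrow> nat \<Rightarrow> 'a set \<Rightarrow> real" where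
  "fix_within V out r 0 S = (if S = V then 1 else 0)"
| "fix_within V out r (Suc t) S =
     (\<Sum>v\<in>V. \<Sum>w\<in>out v.
        (fitness r S v / total_fitness V r S) * (1 / real (card (out v)))
        * fix_within V out r t (moran_update S v w))"

text \<open>Fixation probability: probability that eventually all vertices are mutants.
  Since the all-mutant state is absorbing, this is the limit of the t-step
  probabilities.\<close>
definition fixation_prob :: "'a set \<Rightarrow> ('a \<Rightarrow> 'a set) \<Rightarrow> real \<Rightarrow> 'a set \<Rightarrow> real" where
  "fixation_prob V out r S = lim (\<lambda>t. fix_within V out r t S)"

definition avg_fixation_prob :: "'a set \<Rightarrow> ('a \<Rightarrow> 'a set) \<Rightarrow> real \<Rightarrow> real" where
  "avg_fixation_prob V out r = (\<Sum>x\<in>V. fixation_prob V out r {x}) / real (card V)"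

text \<open>The (k,l,m)-megastar. Reservoirs R_i = {Res i j | j<m}, cliques
  K_i = {Cl i j | j<k}, feeders Feed i, for i < l, and the centre.\<close>
datatype mvert = Centre | Res nat nat | Feed nat | Cl nat nat

definition megastar_V :: "nat \<Rightarrow> nat \<Rightarrow> nat \<Rightarrow> mvert set" where
  "megastar_V k l m = {Centre} \<union> {Res i j | i j. i < l \<and> j < m}
     \<union> {Feed i | i. i < l} \<union> {Cl i j | i j. i < l \<and> j < k}"

fun megastar_out :: "nat \<Rightarrow> nat \<Rightarrow> nat \<Rightarrow> mvert \<Rightarrow> mvert set" where
  "megastar_out k l m Centre = {Res i j | i j. i < l \<and> j < m}"
| "megastar_out k l m (Res i j) = {Feed i}"
| "megastar_out k l m (Feed i) = {Cl i j | j. j < k}"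
| "megastar_out k l m (Cl i j) = {Cl i j' | j'. j' < k \<and> j' \<noteq> j} \<union> {Centre}"

end

theory Submission
  imports Defs
begin


locale moran =
  fixes V :: "'a set" and out :: "'a \<Rightarrow> 'a set" and r :: real
  assumes finV: "finite V" and neV: "V \<noteq> {}"
    and outV: "v \<in> V \<Longrightarrow> out v \<subseteq> V" and outne: "v \<in> V \<Longrightarrow> out v \<noteq> {}"
    and rpos: "r > 0"
begin

lemma finout: "v \<in> V \<Longrightarrow> finite (out v)"
  using finV outV finite_subset by blast

lemma tf_pos: "total_fitness V r S > 0"
  unfolding total_fitness_def using finV neV rpos
  by (intro sum_pos) (auto simp: fitness_def)

lemma fit_nn: "fitness r S v \<ge> 0" using rpos by (simp add: fitness_def)

lemma coef_nn: "0 \<le> fitness r S v / total_fitness V r S * (1 / real (card (out v)))"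
  using tf_pos[of S] fit_nn[of S v] by simp

lemma sumP: "(\<Sum>v\<in>V. \<Sum>w\<in>out v. fitness r S v / total_fitness V r S * (1 / real (card (out v)))) = 1"
proof -
  have "(\<Sum>v\<in>V. \<Sum>w\<in>out v. fitness r S v / total_fitness V r S * (1 / real (card (out v))))
      = (\<Sum>v\<in>V. fitness r S v / total_fitness V r S)"
  proof (rule sum.cong)
    fix v assume v: "v \<in> V"
    have "card (out v) > 0" using finout[OF v] outne[OF v] by (simp add: card_gt_0_iff)
    then show "(\<Sum>w\<in>out v. fitness r S v / total_fitness V r S * (1 / real (card (out v))))
      = fitness r S v / total_fitness V r S" by simp
  qed simp
  also have "\<dots> = total_fitness V r S / total_fitness V r S"
    by (simp add: total_fitness_def sum_divide_distrib[symmetric])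
  also have "\<dots> = 1" using tf_pos[of S] by simp
  finally show ?thesis .
qed

lemma fw_nonneg: "0 \<le> fix_within V out r t S"
proof (induction t arbitrary: S)
  case 0 then show ?case by simp
next
  case (Suc t)
  show ?case unfolding fix_within.simps
    by (intro sum_nonneg mult_nonneg_nonneg coef_nn Suc)
qed

lemma upd_sub: "S \<subseteq> V \<Longrightarrow> v \<in> V \<Longrightarrow> w \<in> out v \<Longrightarrow> moran_update S v w \<subseteq> V"
  using outV by (auto simp: moran_update_def)

lemma super:
  assumes g0: "\<And>S. S \<subseteq> V \<Longrightarrow> 0 \<le> g S" and gV: "1 \<le> g V"
    and sh: "\<And>S. S \<subseteq> V \<Longrightarrow> (\<Sum>v\<in>V. \<Sum>w\<in>out v. fitness r S v / total_fitness V r S * (1 / real (card (out v))) * g (moran_update S v w)) \<le> g S"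
  shows "S \<subseteq> V \<Longrightarrow> fix_within V out r t S \<le> g S"
proof (induction t arbitrary: S)
  case 0 then show ?case using g0 gV by simp
next
  case (Suc t)
  have "fix_within V out r (Suc t) S \<le> (\<Sum>v\<in>V. \<Sum>w\<in>out v. fitness r S v / total_fitness V r S * (1 / real (card (out v))) * g (moran_update S v w))"
    unfolding fix_within.simps
    apply (intro sum_mono mult_left_mono)
    using Suc upd_sub coef_nn by auto
  also have "\<dots> \<le> g S" using sh Suc by blast
  finally show ?case .
qed

lemma mono_fw: "S \<subseteq> V \<Longrightarrow> fix_within V out r t S \<le> fix_within V out r (Suc t) S"
proof (induction t arbitrary: S)
  case 0
  show ?case
  proof (cases "S = V")
    case True
    have "fix_within V out r (Suc 0) S = (\<Sum>v\<in>V. \<Sum>w\<in>out v. fitness r S v / total_fitness V r S * (1 / real (card (out v))))"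
      unfolding fix_within.simps using True outV
      by (intro sum.cong refl) (auto simp: moran_update_def insert_absorb)
    then show ?thesis using sumP True by simp
  next
    case False then show ?thesis using fw_nonneg[of "Suc 0" S] by simp
  qed
next
  case (Suc t)
  show ?case
    apply (subst (1 2) fix_within.simps)
    apply (intro sum_mono mult_left_mono)
    using Suc upd_sub coef_nn by auto
qed

lemma fp_le:
  assumes g0: "\<And>S. S \<subseteq> V \<Longrightarrow> 0 \<le> g S" and gV: "1 \<le> g V"
    and sh: "\<And>S. S \<subseteq> V \<Longrightarrow> (\<Sum>v\<in>V. \<Sum>w\<in>out v. fitness r S v / total_fitness V r S * (1 / real (card (out v))) * g (moran_update S v w)) \<le> g S"
    and S: "S \<subseteq> V"
  shows "fixation_prob V out r S \<le> g S"
proof -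
  have inc: "incseq (\<lambda>t. fix_within V out r t S)"
    by (rule incseq_SucI) (rule mono_fw[OF S])
  have b: "\<And>t. fix_within V out r t S \<le> 1"
    by (rule super[of "\<lambda>_. 1"]) (use sumP S in auto)
  obtain L where L: "(\<lambda>t. fix_within V out r t S) \<longlonglongrightarrow> L"
    using incseq_convergent[OF inc allI[OF b]] by blast
  have "fixation_prob V out r S = L" unfolding fixation_prob_def using L by (rule limI)
  moreover have "L \<le> g S"
    by (rule LIMSEQ_le_const2[OF L]) (use super[OF g0 gV sh S] in auto)
  ultimately show ?thesis by simp
qed

lemma fp_le1: "S \<subseteq> V \<Longrightarrow> fixation_prob V out r S \<le> 1"
  by (rule fp_le[of "\<lambda>_. 1"]) (use sumP in auto)

lemma harm_crit:
  assumes h: "(\<Sum>v\<in>V. \<Sum>w\<in>out v. fitness r S v / real (card (out v)) * (g (moran_update S v w) - g S)) \<le> 0"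
  shows "(\<Sum>v\<in>V. \<Sum>w\<in>out v. fitness r S v / total_fitness V r S * (1 / real (card (out v))) * g (moran_update S v w)) \<le> g S"
proof -
  let ?T = "total_fitness V r S"
  have T: "?T > 0" by (rule tf_pos)
  have e: "fitness r S v / ?T * (1 / real (card (out v))) * g (moran_update S v w)
     = (fitness r S v / real (card (out v)) * (g (moran_update S v w) - g S)) / ?T
       + (fitness r S v / ?T * (1 / real (card (out v)))) * g S" for v w
    using T by (simp add: diff_divide_distrib algebra_simps)
  have "(\<Sum>v\<in>V. \<Sum>w\<in>out v. fitness r S v / ?T * (1 / real (card (out v))) * g (moran_update S v w))
     = (\<Sum>v\<in>V. \<Sum>w\<in>out v. fitness r S v / real (card (out v)) * (g (moran_update S v w) - g S)) / ?T
       + (\<Sum>v\<in>V. \<Sum>w\<in>out v. fitness r S v / ?T * (1 / real (card (out v)))) * g S"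
    unfolding e by (simp only: sum.distrib sum_divide_distrib sum_distrib_right)
  also have "\<dots> \<le> g S" using sumP[of S] h T by (simp add: divide_nonpos_pos)
  finally show ?thesis .
qed

lemma diff_notin: "i \<notin> S \<Longrightarrow> S - {i} = S" by blast

lemma h_decomp:
  assumes S: "S \<subseteq> V"
  shows "(\<Sum>v\<in>V. \<Sum>w\<in>out v. fitness r S v / real (card (out v)) * (g (moran_update S v w) - g S))
   = (\<Sum>v\<in>S. \<Sum>w\<in>out v - S. r / real (card (out v)) * (g (insert w S) - g S))
   + (\<Sum>w\<in>S. \<Sum>v\<in>{v\<in>V - S. w \<in> out v}. 1 / real (card (out v)) * (g (S - {w}) - g S))"
proof -
  have finS: "finite S" using S finV finite_subset by blast
  let ?F = "\<lambda>v. \<Sum>w\<in>out v. fitness r S v / real (card (out v)) * (g (moran_update S v w) - g S)"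
  have V: "V = S \<union> (V - S)" using S by blast
  have "(\<Sum>v\<in>V. ?F v) = (\<Sum>v\<in>S. ?F v) + (\<Sum>v\<in>V - S. ?F v)"
    by (subst V, rule sum.union_disjoint) (use finS finV in auto)
  also have "(\<Sum>v\<in>S. ?F v) = (\<Sum>v\<in>S. \<Sum>w\<in>out v - S. r / real (card (out v)) * (g (insert w S) - g S))"
  proof (rule sum.cong[OF refl])
    fix v assume v: "v \<in> S"
    have "?F v = (\<Sum>w\<in>out v - S. fitness r S v / real (card (out v)) * (g (moran_update S v w) - g S))"
      by (rule sum.mono_neutral_right) (use v S finout in \<open>auto simp: moran_update_def insert_absorb\<close>)
    then show "?F v = (\<Sum>w\<in>out v - S. r / real (card (out v)) * (g (insert w S) - g S))"
      using v by (simp add: fitness_def moran_update_def)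
  qed
  also have "(\<Sum>v\<in>V - S. ?F v) = (\<Sum>v\<in>V - S. \<Sum>w\<in>{w\<in>S. w \<in> out v}. 1 / real (card (out v)) * (g (S - {w}) - g S))"
  proof (rule sum.cong[OF refl])
    fix v assume v: "v \<in> V - S"
    have "?F v = (\<Sum>w\<in>{w\<in>S. w \<in> out v}. fitness r S v / real (card (out v)) * (g (moran_update S v w) - g S))"
      by (rule sum.mono_neutral_right) (use v S finout in \<open>auto simp: moran_update_def,
         metis diff_notin\<close>)
    then show "?F v = (\<Sum>w\<in>{w\<in>S. w \<in> out v}. 1 / real (card (out v)) * (g (S - {w}) - g S))"
      using v by (simp add: fitness_def moran_update_def)
  qed
  also have "\<dots> = (\<Sum>w\<in>S. \<Sum>v\<in>{v\<in>V - S. w \<in> out v}. 1 / real (card (out v)) * (g (S - {w}) - g S))"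
    by (rule sum.swap_restrict) (use finS finV in auto)
  finally show ?thesis .
qed

end

lemma alg:
  fixes r L M :: real
  assumes r: "r > 1" and L: "L \<ge> 1" and M: "M \<ge> 1"
  defines "d \<equiv> 1 / (L * M)"
  defines "D \<equiv> (r + d)^2 + (M - 1) * d"
  shows "r * (r + d) / D \<le> 1 - 1 / (5 * L * r^2)"
proof -
  have LM: "1 \<le> L * M" using L M mult_mono[of 1 L 1 M] by simp
  have d0: "0 < d" "d \<le> 1" using L M LM by (auto simp: d_def field_simps)
  have m1: "(M - 1) * d \<ge> 0" using d0 M by simp
  have rd2: "(r + d)^2 > 0" using r d0 by simp
  have Dpos: "D > 0" using m1 rd2 unfolding D_def by linarith
  have e: "1 - r * (r + d) / D = d * (r + d + M - 1) / D"
    using Dpos unfolding D_def by (simp add: field_simps power2_eq_square)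
  have hML: "M \<le> L * M" using mult_right_mono[of 1 L M] L M by simp
  have md: "(M - 1) * d \<le> 1" unfolding d_def using LM hML by (simp add: pos_divide_le_eq)
  have "(r + d)^2 \<le> (2*r)^2" using d0 r by (intro power_mono) auto
  moreover have "(2*r)^2 = 4 * r^2" by (simp add: power2_eq_square)
  moreover have "1 < r^2" using r by (simp add: one_less_power)
  ultimately have D5: "D \<le> 5 * r^2" using md unfolding D_def by linarith
  have "1 / (5 * L * r^2) = d * M / (5 * r^2)" using L M by (simp add: d_def field_simps)
  also have "\<dots> \<le> d * M / D" using Dpos D5 d0 M r by (intro divide_left_mono) (auto intro!: mult_pos_pos)
  also have "\<dots> \<le> d * (r + d + M - 1) / D" using Dpos d0 r by (intro divide_right_mono mult_left_mono) auto
  finally show ?thesis using e by linarith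
qed


lemma memV: "v \<in> megastar_V k l m \<longleftrightarrow> (case v of Centre \<Rightarrow> True | Res i j \<Rightarrow> i<l \<and> j<m
   | Feed i \<Rightarrow> i<l | Cl i j \<Rightarrow> i<l \<and> j<k)"
  by (cases v) (auto simp: megastar_V_def)

lemma V_eq: "megastar_V k l m = insert Centre ((\<lambda>(i,j). Res i j) ` ({..<l}\<times>{..<m}) \<union> Feed ` {..<l}
   \<union> (\<lambda>(i,j). Cl i j) ` ({..<l}\<times>{..<k}))"
  by (auto simp: megastar_V_def)

lemma finV: "finite (megastar_V k l m)" unfolding V_eq by auto

lemma card3: "card (A \<union> B \<union> C) \<le> card A + card B + card C"
  using card_Un_le[of "A \<union> B" C] card_Un_le[of A B] by linarith

lemma cardV: "card (megastar_V k l m) \<le> 1 + l*m + l + l*k"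
proof -
  have "card (megastar_V k l m) \<le> 1 + card ((\<lambda>(i,j). Res i j) ` ({..<l}\<times>{..<m}) \<union> Feed ` {..<l}
   \<union> (\<lambda>(i,j). Cl i j) ` ({..<l}\<times>{..<k}))"
    unfolding V_eq by (rule card_insert_le_m1) auto
  also have "\<dots> \<le> 1 + (card ((\<lambda>(i,j). Res i j) ` ({..<l}\<times>{..<m})) + card (Feed ` {..<l})
     + card ((\<lambda>(i,j). Cl i j) ` ({..<l}\<times>{..<k})))"
    using card3 by (simp add: Un_assoc del: Un_insert_left)
  also have "\<dots> \<le> 1 + (l*m + l + l*k)"
    by (intro add_mono card_image_le[THEN order.trans]) (auto simp: card_cartesian_product)
  finally show ?thesis by simp
qed

lemma out_Centre: "megastar_out k l m Centre = (\<lambda>(i,j). Res i j) ` ({..<l}\<times>{..<m})" by auto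
lemma out_Feed: "megastar_out k l m (Feed i) = Cl i ` {..<k}" by auto
lemma out_Cl: "megastar_out k l m (Cl i j) = insert Centre (Cl i ` ({..<k} - {j}))" by auto

lemma card_out_Centre: "card (megastar_out k l m Centre) = l*m"
  unfolding out_Centre by (subst card_image) (auto simp: inj_on_def card_cartesian_product)
lemma card_out_Feed: "card (megastar_out k l m (Feed i)) = k"
  unfolding out_Feed by (subst card_image) (auto simp: inj_on_def)
lemma card_out_Cl: "j < k \<Longrightarrow> card (megastar_out k l m (Cl i j)) = k"
  unfolding out_Cl by (subst card_insert_disjoint) (auto simp: card_image inj_on_def)
lemma card_out_Res: "card (megastar_out k l m (Res i j)) = 1" by simp

locale mega =
  fixes k l m :: nat and r :: real
  assumes kpos: "k > 0" and lpos: "l > 0" and mpos: "m > 0" and r1: "r > 1"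
begin

sublocale moran "megastar_V k l m" "megastar_out k l m" r
proof
  show "finite (megastar_V k l m)" by (rule finV)
  show "megastar_V k l m \<noteq> {}" by (auto simp: megastar_V_def)
  show "r > 0" using r1 by simp
  fix v assume "v \<in> megastar_V k l m"
  then show "megastar_out k l m v \<subseteq> megastar_V k l m"
    by (cases v) (auto simp: megastar_V_def)
  show "megastar_out k l m v \<noteq> {}"
    using kpos lpos mpos by (cases v) auto
qed

abbreviation "MV \<equiv> megastar_V k l m"
abbreviation "MO \<equiv> megastar_out k l m"

lemma Centre_in: "Centre \<in> MV" by (simp add: memV)

lemma In_Cl: assumes "j < k" "i < l"
  shows "{v \<in> MV - {Cl i j}. Cl i j \<in> MO v} = insert (Feed i) (Cl i ` ({..<k} - {j}))"
  apply (rule set_eqI)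
  subgoal for v using assms by (cases v) (auto simp: memV)
  done

lemma clique_bound: assumes ij: "i < l" "j < k"
  shows "fixation_prob MV MO r {Cl i j} \<le> r / (r + 1)"
proof -
  define x where "x = Cl i j"
  define a where "a = r / (r + 1)"
  define g where "g S = (if S = {} then 0 else if S = {x} then a else (1::real))" for S
  have a01: "0 \<le> a" "a \<le> 1" using r1 by (auto simp: a_def)
  have xV: "x \<in> MV" using ij by (simp add: x_def memV)
  have "fixation_prob MV MO r {Cl i j} \<le> g {Cl i j}"
  proof (rule fp_le[of g])
    show "0 \<le> g S" for S using a01 by (simp add: g_def)
    have "MV \<noteq> {}" "MV \<noteq> {x}" using Centre_in by (auto simp: x_def)
    then show "1 \<le> g MV" by (simp add: g_def)
    show "{Cl i j} \<subseteq> MV" using xV by (simp add: x_def)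
  next
    fix S assume S: "S \<subseteq> MV"
    show "(\<Sum>v\<in>MV. \<Sum>w\<in>MO v. fitness r S v / total_fitness MV r S * (1 / real (card (MO v))) * g (moran_update S v w)) \<le> g S"
    proof (rule harm_crit)
      consider "S = {}" | "S = {x}" | "S \<noteq> {}" "S \<noteq> {x}" by blast
      then show "(\<Sum>v\<in>MV. \<Sum>w\<in>MO v. fitness r S v / real (card (MO v)) * (g (moran_update S v w) - g S)) \<le> 0"
      proof cases
        case 1
        then show ?thesis using h_decomp[OF S, of g] by simp
      next
        case 2
        have xo: "x \<notin> MO x" by (simp add: x_def)
        have p1: "(\<Sum>v\<in>S. \<Sum>w\<in>MO v - S. r / real (card (MO v)) * (g (insert w S) - g S)) = r * (1 - a)"
        proof -
          have cx: "card (MO x) = k" unfolding x_def by (rule card_out_Cl[OF ij(2)])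
          have gx: "g {x} = a" by (simp add: g_def)
          have gw: "w \<in> MO x \<Longrightarrow> g (insert w {x}) = 1" for w
            using xo by (auto simp: g_def)
          have "(\<Sum>v\<in>S. \<Sum>w\<in>MO v - S. r / real (card (MO v)) * (g (insert w S) - g S))
              = (\<Sum>w\<in>MO x - {x}. r / real (card (MO x)) * (g (insert w {x}) - g {x}))"
            using 2 by simp
          also have "MO x - {x} = MO x" using xo by blast
          also have "(\<Sum>w\<in>MO x. r / real (card (MO x)) * (g (insert w {x}) - g {x}))
              = (\<Sum>w\<in>MO x. r / real k * (1 - a))"
            using gw gx cx by (intro sum.cong) auto
          also have "\<dots> = r * (1 - a)" using kpos cx by simp
          finally show ?thesis .
        qed
        have p2: "(\<Sum>w\<in>S. \<Sum>v\<in>{v\<in>MV - S. w \<in> MO v}. 1 / real (card (MO v)) * (g (S - {w}) - g S)) = - a"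
        proof -
          have cv: "v \<in> insert (Feed i) (Cl i ` ({..<k} - {j})) \<Longrightarrow> card (MO v) = k" for v
            by (auto simp del: megastar_out.simps simp: card_out_Feed card_out_Cl)
          have "(\<Sum>w\<in>S. \<Sum>v\<in>{v\<in>MV - S. w \<in> MO v}. 1 / real (card (MO v)) * (g (S - {w}) - g S))
              = (\<Sum>v\<in>{v\<in>MV - {x}. x \<in> MO v}. 1 / real (card (MO v)) * (g ({x} - {x}) - g {x}))"
            using 2 by simp
          also have "\<dots> = (\<Sum>v\<in>insert (Feed i) (Cl i ` ({..<k} - {j})). 1 / real (card (MO v)) * (g ({x} - {x}) - g {x}))"
            unfolding x_def In_Cl[OF ij(2,1)] ..
          also have "\<dots> = (\<Sum>v\<in>insert (Feed i) (Cl i ` ({..<k} - {j})). 1 / real k * (- a))"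
            using cv by (intro sum.cong refl) (simp add: g_def)
          also have "\<dots> = real (card (insert (Feed i) (Cl i ` ({..<k} - {j})))) * (1 / real k * (- a))"
            by simp
          also have "card (insert (Feed i) (Cl i ` ({..<k} - {j}))) = k"
            using ij kpos by (subst card_insert_disjoint) (auto simp: card_image inj_on_def)
          finally show ?thesis using kpos by simp
        qed
        have "r * (1 - a) - a = 0" using r1 by (simp add: a_def field_simps)
        then show ?thesis using h_decomp[OF S, of g] p1 p2 by simp
      next
        case 3
        have "g S = 1" using 3 by (simp add: g_def)
        then show ?thesis
          apply (intro sum_nonpos mult_nonneg_nonpos)
          using fit_nn a01 by (auto simp: g_def intro!: divide_nonneg_nonneg)
      qed
    qed
  qed
  then show ?thesis by (simp add: g_def x_def a_def)
qed

lemma In_Res: assumes "j < m" "i < l" "Centre \<notin> S"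
  shows "{v \<in> MV - S. Res i j \<in> MO v} = {Centre}"
  apply (rule set_eqI)
  subgoal for v using assms by (cases v) (auto simp: memV)
  done

lemma In_Feed: assumes "j < m" "i < l"
  shows "{v \<in> MV - {Res i j, Feed i}. Feed i \<in> MO v} = Res i ` ({..<m} - {j})"
  apply (rule set_eqI)
  subgoal for v using assms by (cases v) (auto simp: memV)
  done

lemma res_bound: assumes ij: "i < l" "j < m"
  shows "fixation_prob MV MO r {Res i j} \<le> 1 - 1 / (5 * real l * r^2)"
proof -
  define x where "x = Res i j"
  define F where "F = Feed i"
  define d where "d = 1 / (real l * real m)"
  define D where "D = (r + d)^2 + (real m - 1) * d"
  define a where "a = r * (r + d) / D"
  define b where "b = (r + d)^2 / D"
  define g where "g S = (if S = {} then 0 else if S = {x} then a else if S = {x, F} then b else (1::real))" for S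
  have d0: "0 < d" using lpos mpos by (simp add: d_def)
  have m1: "(real m - 1) * d \<ge> 0" using mpos d0 by simp
  have rd2: "(r + d)^2 > 0" using r1 d0 by simp
  have Dpos: "D > 0" using m1 rd2 unfolding D_def by linarith
  have ba: "b - a = (r + d) * d / D" unfolding a_def b_def
    by (simp add: diff_divide_distrib[symmetric] power2_eq_square algebra_simps)
  have b1: "1 - b = (real m - 1) * d / D" using Dpos unfolding b_def D_def
    by (simp add: field_simps)
  have ab: "0 \<le> a" "a \<le> b" "b \<le> 1"
  proof -
    show "0 \<le> a" using r1 d0 Dpos by (simp add: a_def)
    show "a \<le> b" using r1 d0 Dpos unfolding a_def b_def
      by (intro divide_right_mono) (auto simp: power2_eq_square)
    have "(real m - 1) * d \<ge> 0" using mpos d0 by simp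
    then show "b \<le> 1" using Dpos unfolding b_def D_def by simp
  qed
  have xF: "x \<noteq> F" by (simp add: x_def F_def)
  have xV: "x \<in> MV" "F \<in> MV" using ij by (auto simp: x_def F_def memV)
  have gx: "g {x} = a" by (simp add: g_def)
  have gxF: "g {x, F} = b" "g {F, x} = b" using xF by (auto simp: g_def insert_commute)
  have gF: "g {F} = 1" using xF by (auto simp: g_def doubleton_eq_iff)
  have cx: "card (MO x) = 1" by (simp add: x_def)
  have Ox: "MO x = {F}" by (simp add: x_def F_def)
  have cF: "card (MO F) = k" unfolding F_def by (rule card_out_Feed)
  have cC: "card (MO Centre) = l * m" by (rule card_out_Centre)
  have "fixation_prob MV MO r {x} \<le> g {x}"
  proof (rule fp_le[of g])
    show "0 \<le> g S" for S using ab by (simp add: g_def)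
    have "MV \<noteq> {}" "MV \<noteq> {x}" "MV \<noteq> {x, F}" using Centre_in by (auto simp: x_def F_def)
    then show "1 \<le> g MV" by (simp add: g_def)
    show "{x} \<subseteq> MV" using xV by simp
  next
    fix S assume S: "S \<subseteq> MV"
    show "(\<Sum>v\<in>MV. \<Sum>w\<in>MO v. fitness r S v / total_fitness MV r S * (1 / real (card (MO v))) * g (moran_update S v w)) \<le> g S"
    proof (rule harm_crit)
      consider "S = {}" | "S = {x}" | "S = {x, F}" | "S \<noteq> {}" "S \<noteq> {x}" "S \<noteq> {x, F}" by blast
      then show "(\<Sum>v\<in>MV. \<Sum>w\<in>MO v. fitness r S v / real (card (MO v)) * (g (moran_update S v w) - g S)) \<le> 0"
      proof cases
        case 1
        then show ?thesis using h_decomp[OF S, of g] by simp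
      next
        case 2
        have p1: "(\<Sum>v\<in>S. \<Sum>w\<in>MO v - S. r / real (card (MO v)) * (g (insert w S) - g S)) = r * (b - a)"
          using 2 xF by (simp add: Ox cx gx gxF)
        have p2: "(\<Sum>w\<in>S. \<Sum>v\<in>{v\<in>MV - S. w \<in> MO v}. 1 / real (card (MO v)) * (g (S - {w}) - g S)) = - d * a"
        proof -
          have "(\<Sum>w\<in>S. \<Sum>v\<in>{v\<in>MV - S. w \<in> MO v}. 1 / real (card (MO v)) * (g (S - {w}) - g S))
              = (\<Sum>v\<in>{v\<in>MV - {x}. x \<in> MO v}. 1 / real (card (MO v)) * (g ({x} - {x}) - g {x}))"
            using 2 by simp
          also have "{v\<in>MV - {x}. x \<in> MO v} = {Centre}"
            unfolding x_def by (rule In_Res[OF ij(2,1)]) simp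
          finally show ?thesis using cC gx by (simp add: g_def d_def)
        qed
        have "r * (b - a) - d * a = 0" unfolding ba by (simp add: a_def)
        then show ?thesis using h_decomp[OF S, of g] p1 p2 by simp
      next
        case 3
        have p1: "(\<Sum>v\<in>S. \<Sum>w\<in>MO v - S. r / real (card (MO v)) * (g (insert w S) - g S)) = r * (1 - b)"
        proof -
          have g1: "w \<in> MO F \<Longrightarrow> g (insert w {x, F}) = 1" for w
            by (auto simp: g_def x_def F_def doubleton_eq_iff)
          have "(\<Sum>v\<in>S. \<Sum>w\<in>MO v - S. r / real (card (MO v)) * (g (insert w S) - g S))
             = (\<Sum>w\<in>MO x - {x, F}. r / real (card (MO x)) * (g (insert w {x, F}) - g {x, F}))
             + (\<Sum>w\<in>MO F - {x, F}. r / real (card (MO F)) * (g (insert w {x, F}) - g {x, F}))"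
            using 3 xF by simp
          also have "MO x - {x, F} = {}" using Ox by blast
          also have "MO F - {x, F} = MO F" by (auto simp: x_def F_def)
          also have "(\<Sum>w\<in>MO F. r / real (card (MO F)) * (g (insert w {x, F}) - g {x, F}))
              = (\<Sum>w\<in>MO F. r / real k * (1 - b))"
            using g1 gxF cF by (intro sum.cong) auto
          also have "\<dots> = r * (1 - b)" using cF kpos by simp
          finally show ?thesis by simp
        qed
        have p2: "(\<Sum>w\<in>S. \<Sum>v\<in>{v\<in>MV - S. w \<in> MO v}. 1 / real (card (MO v)) * (g (S - {w}) - g S))
           = d * (1 - b) + (real m - 1) * (a - b)"
        proof -
          have "(\<Sum>w\<in>S. \<Sum>v\<in>{v\<in>MV - S. w \<in> MO v}. 1 / real (card (MO v)) * (g (S - {w}) - g S))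
              = (\<Sum>v\<in>{v\<in>MV - {x, F}. x \<in> MO v}. 1 / real (card (MO v)) * (g ({x, F} - {x}) - g {x, F}))
              + (\<Sum>v\<in>{v\<in>MV - {x, F}. F \<in> MO v}. 1 / real (card (MO v)) * (g ({x, F} - {F}) - g {x, F}))"
            using 3 xF by simp
          also have "{v\<in>MV - {x, F}. x \<in> MO v} = {Centre}"
            unfolding x_def F_def by (rule In_Res[OF ij(2,1)]) simp
          also have "{v\<in>MV - {x, F}. F \<in> MO v} = Res i ` ({..<m} - {j})"
            unfolding x_def F_def by (rule In_Feed[OF ij(2,1)])
          also have "{x, F} - {x} = {F}" using xF by auto
          also have "{x, F} - {F} = {x}" using xF by auto
          also have "(\<Sum>v\<in>Res i ` ({..<m} - {j}). 1 / real (card (MO v)) * (g {x} - g {x, F}))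
              = (\<Sum>v\<in>Res i ` ({..<m} - {j}). a - b)"
            using gx gxF by (intro sum.cong) auto
          finally have e: "(\<Sum>w\<in>S. \<Sum>v\<in>{v\<in>MV - S. w \<in> MO v}. 1 / real (card (MO v)) * (g (S - {w}) - g S))
            = (\<Sum>v\<in>{Centre}. 1 / real (card (MO v)) * (g {F} - g {x, F})) + (\<Sum>v\<in>Res i ` ({..<m} - {j}). a - b)" .
          have "card (Res i ` ({..<m} - {j})) = m - 1"
            using ij by (simp add: card_image inj_on_def)
          then show ?thesis unfolding e using cC gF gxF mpos by (simp add: d_def of_nat_diff)
        qed
        have hab: "a - b = - ((r + d) * d / D)" using ba by simp
        have "r * (1 - b) + (d * (1 - b) + (real m - 1) * (a - b)) = (r + d) * (1 - b) + (real m - 1) * (a - b)"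
          by (simp add: algebra_simps)
        also have "\<dots> = (r + d) * ((real m - 1) * d / D) + (real m - 1) * (- ((r + d) * d / D))"
          by (simp only: b1 hab)
        also have "\<dots> = 0" by (simp add: field_simps)
        finally have "r * (1 - b) + (d * (1 - b) + (real m - 1) * (a - b)) = 0" .
        then show ?thesis using h_decomp[OF S, of g] p1 p2 by simp
      next
        case 4
        have "g S = 1" using 4 by (simp add: g_def)
        then show ?thesis
          apply (intro sum_nonpos mult_nonneg_nonpos)
          using fit_nn ab by (auto simp: g_def intro!: divide_nonneg_nonneg)
      qed
    qed
  qed
  also have "g {x} \<le> 1 - 1 / (5 * real l * r^2)"
    unfolding gx a_def D_def d_def using alg[of r "real l" "real m"] r1 lpos mpos by simp
  finally show ?thesis by (simp add: x_def)
qed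

end


lemma nat_bound: "(k::nat) > 0 \<Longrightarrow> l > 0 \<Longrightarrow> m > 0 \<Longrightarrow> 1 + l*m + l + l*k \<le> (m + l*k)^2"
proof -
  assume k: "k > 0" and l: "l > 0" and m: "m > 0"
  have f1: "1 \<le> m*m" using mult_le_mono[of 1 m 1 m] m by simp
  have f2: "l*m \<le> m*(l*k)" using k by simp
  have f3: "l*k \<le> m*(l*k)" using m by simp
  have f4: "l \<le> (l*k)*(l*k)" using k l by (metis le_square mult_le_mono1 One_nat_def Suc_leI le_trans mult_1 mult.commute)
  have e: "(m + l*k)^2 = m*m + m*(l*k) + m*(l*k) + (l*k)*(l*k)" by (simp add: power2_eq_square algebra_simps)
  show ?thesis unfolding e using f1 f2 f3 f4 by linarith
qed

theorem theorem7p3: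
  fixes r :: real and k l m :: nat
  assumes "r > 1" and "k > 0" and "l > 0" and "m > 0"
  shows "avg_fixation_prob (megastar_V k l m) (megastar_out k l m) r
           \<le> 1 - 1 / (52 * r^2 * sqrt (real (card (megastar_V k l m))))"
proof -
  interpret mega k l m r using assms by unfold_locales
  define n where "n = card MV"
  define RS where "RS = (\<lambda>(i,j). Res i j) ` ({..<l}\<times>{..<m})"
  define CS where "CS = (\<lambda>(i,j). Cl i j) ` ({..<l}\<times>{..<k})"
  have npos: "n > 0" using finV Centre_in unfolding n_def by (auto simp: card_gt_0_iff)
  have r2: "r^2 > 1" using assms(1) by (simp add: one_less_power)
  let ?e = "\<lambda>x. 1 - fixation_prob MV MO r {x}"
  have enn: "x \<in> MV \<Longrightarrow> 0 \<le> ?e x" for x using fp_le1[of "{x}"] by simp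
  have sub: "RS \<union> CS \<subseteq> MV" by (auto simp: RS_def CS_def memV)
  have disj: "RS \<inter> CS = {}" by (auto simp: RS_def CS_def)
  have cRS: "card RS = l * m" unfolding RS_def by (subst card_image) (auto simp: inj_on_def card_cartesian_product)
  have cCS: "card CS = l * k" unfolding CS_def by (subst card_image) (auto simp: inj_on_def card_cartesian_product)
  have eR: "x \<in> RS \<Longrightarrow> 1 / (5 * real l * r^2) \<le> ?e x" for x
  proof -
    assume "x \<in> RS"
    then obtain i j where "x = Res i j" "i < l" "j < m" by (auto simp: RS_def)
    then have "fixation_prob MV MO r {x} \<le> 1 - 1 / (5 * real l * r^2)" using res_bound by simp
    then show ?thesis by linarith
  qed
  have c1: "1 / (5 * r^2) \<le> 1 - r / (r + 1)"
  proof -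
    have "1 - r / (r + 1) = 1 / (r + 1)" using assms(1) by (simp add: field_simps)
    moreover have "r + 1 \<le> 5 * r^2"
    proof -
      have "r * 1 \<le> r * r" using assms(1) by (intro mult_left_mono) auto
      then show ?thesis using r2 by (simp add: power2_eq_square)
    qed
    ultimately show ?thesis using assms(1) by (simp add: frac_le)
  qed
  have eC: "x \<in> CS \<Longrightarrow> 1 / (5 * r^2) \<le> ?e x" for x
  proof -
    assume "x \<in> CS"
    then obtain i j where "x = Cl i j" "i < l" "j < k" by (auto simp: CS_def)
    then have "fixation_prob MV MO r {x} \<le> r / (r + 1)" using clique_bound by simp
    then show ?thesis using c1 by linarith
  qed
  have "(\<Sum>x\<in>RS. ?e x) \<ge> real (card RS) * (1 / (5 * real l * r^2))"
    using eR by (intro sum_bounded_below) auto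
  then have sR: "(\<Sum>x\<in>RS. ?e x) \<ge> real m / (5 * r^2)" using cRS assms by simp
  have "(\<Sum>x\<in>CS. ?e x) \<ge> real (card CS) * (1 / (5 * r^2))"
    using eC by (intro sum_bounded_below) auto
  then have sC: "(\<Sum>x\<in>CS. ?e x) \<ge> real (l * k) / (5 * r^2)" using cCS by simp
  have finRC: "finite RS" "finite CS" by (auto simp: RS_def CS_def)
  have "(\<Sum>x\<in>RS \<union> CS. ?e x) \<le> (\<Sum>x\<in>MV. ?e x)"
    using sub enn finV by (intro sum_mono2) auto
  moreover have "(\<Sum>x\<in>RS \<union> CS. ?e x) = (\<Sum>x\<in>RS. ?e x) + (\<Sum>x\<in>CS. ?e x)"
    using finRC disj by (rule sum.union_disjoint)
  ultimately have E: "(\<Sum>x\<in>MV. ?e x) \<ge> (real m + real (l * k)) / (5 * r^2)"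
    using sR sC by (simp add: add_divide_distrib)
  define s where "s = sqrt (real n)"
  have spos: "s > 0" using npos by (simp add: s_def)
  have ss: "s * s = real n" by (simp add: s_def)
  have "real n \<le> real (1 + l*m + l + l*k)" using cardV[of k l m] unfolding n_def by linarith
  also have "\<dots> \<le> real ((m + l*k)^2)" using nat_bound[OF assms(2-4)] by linarith
  finally have "s \<le> real m + real (l * k)" unfolding s_def
    by (metis of_nat_add of_nat_0_le_iff of_nat_power real_sqrt_le_mono real_sqrt_abs abs_of_nonneg power2_eq_square real_sqrt_pow2_iff)
  then have "s / (5 * r^2) \<le> (real m + real (l * k)) / (5 * r^2)"
    by (intro divide_right_mono) auto
  then have E2: "(\<Sum>x\<in>MV. ?e x) \<ge> s / (5 * r^2)" using E by linarith
  have sumfp: "(\<Sum>x\<in>MV. fixation_prob MV MO r {x}) = real n - (\<Sum>x\<in>MV. ?e x)"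
    by (simp add: sum_subtractf n_def)
  have "avg_fixation_prob MV MO r = (real n - (\<Sum>x\<in>MV. ?e x)) / real n"
    unfolding avg_fixation_prob_def sumfp n_def ..
  also have "\<dots> \<le> (real n - s / (5 * r^2)) / real n"
    using E2 npos by (intro divide_right_mono) auto
  also have "\<dots> = 1 - 1 / (5 * r^2 * s)"
    using spos npos r2 ss[symmetric] by (simp add: field_simps)
  also have "\<dots> \<le> 1 - 1 / (52 * r^2 * s)"
  proof -
    have X: "0 < 5 * r^2 * s" using spos r2 by (intro mult_pos_pos) auto
    have "1 / (52 * r^2 * s) \<le> 1 / (5 * r^2 * s)"
      by (rule frac_le) (use X in auto)
    then show ?thesis by linarith
  qed
  finally show ?thesis unfolding s_def n_def .
qed
end
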